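(* In the standing setup below, for every color $\lambda\in\Lambda$ the cycle $\mathsf D_\lambda$ contains an outer edge.
   Context: Colored graphs: a (colored) graph is a finite set of pairs $(e,\alpha)$ with the $e$'s pairwise distinct 2-element vertex subsets $uv$ and $\alpha$ colors (repeats allowed); $V(\cdot),E(\cdot),\chi(\cdot)$ are vertex set, underlying uncolored edge set, color set; rainbow means $|\chi(\mathsf G)|=|\mathsf G|$, almost rainbow means $|\chi(\mathsf G)|=|\mathsf G|-1$; subgraphs are subsets; $\mathsf G+\mathsf e=\mathsf G\cup\{\mathsf e\}$, $\mathsf G-\mathsf e=\mathsf G\setminus\{\mathsf e\}$. Paths/cycles/trees are colored graphs whose underlying edges form a path (two distinct terminals)/cycle/tree; lengths count edges. A long rainbow odd cycle is a rainbow cycle of odd length $\ge7$. A theta graph is a union of three paths with the same terminals $s\ne t$, pairwise sharing no vertex except $s,t$ and no underlying edge; a bad piece is an almost rainbow theta graph with $\ge6$ vertices that is the union of three rainbow such paths. A partition of a graph $\mathsf G$ is a collection of graphs (parts) with union $\mathsf G$, any two sharing at most one vertex and no color. A Frankenstein graph is a graph with a partition $\{\mathsf C_1,..,\mathsf C_c,\mathsf B_1,..,\mathsf B_b,\mathsf T_1,..,\mathsf T_t\}$ ($c+b+t\ge1$) into long rainbow odd cycles $\mathsf C_i$, bad pieces $\mathsf B_i$ and pairwise vertex-disjoint rainbow trees $\mathsf T_i$, having no rainbow even cycle as a subgraph. For a tree $\mathsf T$ with $V(\mathsf T)\subset\mathbb Z_{>0}$, its root is $\min V(\mathsf T)$ and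 $\mathrm{depth}_{\mathsf T}(v)$ is the length of the path in $\mathsf T$ from the root to $v$; the total depth $\mathrm{Depth}(\mathfrak F)$ of a Frankenstein graph is $\sum_{i=1}^t\sum_{v\in V(\mathsf T_i)}\mathrm{depth}_{\mathsf T_i}(v)$. Standing setup: $n\ge1$, $m=\lfloor 6(n-1)/5\rfloor+1$, and $\mathcal D=(\mathsf D_1,\dots,\mathsf D_m)$ is a family of even cycles on $[n]=\{1,\dots,n\}$, all edges of $\mathsf D_i$ having color $i$, such that no rainbow even cycle is a subgraph of $\bigcup_i\mathsf D_i$ (a subgraph of $\mathcal D$ means a simple graph $\subseteq\bigcup_i\mathsf D_i$). Two edges are coincident if they have the same vertex pair and different colors. $\mathfrak F_*$ is a Frankenstein subgraph of $\mathcal D$ (with partition) chosen to maximize $c$, then $b$, then $|\mathfrak F_*|$, then to minimize $\mathrm{Depth}(\mathfrak F_* )$; its partition is $\{\mathsf C_1,..,\mathsf C_c,\mathsf B_1,..,\mathsf B_b,\mathsf T_1,..,\mathsf T_t\}$. Let $\Lambda=\{1,\dots,m\}\setminus\chi(\mathfrak F_* )$. An outer edge is an edge $\mathsf f$ of $\bigcup_{\lambda\in\Lambda}\mathsf D_\lambda$ such that no edge of $\mathfrak F_*$ is coincident to $\mathsf f$. An outer cycle of an outer edge $\mathsf f$ is a rainbow cycle of length $3$ or $5$ in $\mathfrak F_*+\mathsf f$ containing $\mathsf f$. *)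

theory Defs
  imports Main
begin

type_synonym cedge = "nat set \<times> nat"
type_synonym cgraph = "cedge set"

definition colored_graph :: "cgraph \<Rightarrow> bool" where
  "colored_graph G \<longleftrightarrow> finite G \<and>
     (\<forall>x\<in>G. \<exists>u v. u \<noteq> v \<and> fst x = {u, v}) \<and>
     (\<forall>x\<in>G. \<forall>y\<in>G. fst x = fst y \<longrightarrow> x = y)"

definition Vs :: "cgraph \<Rightarrow> nat set" where
  "Vs G = \<Union> (fst ` G)"

definition Es :: "cgraph \<Rightarrow> nat set set" where
  "Es G = fst ` G"

definition cols :: "cgraph \<Rightarrow> nat set" where
  "cols G = snd ` G"

definition rainbow :: "cgraph \<Rightarrow> bool" where
  "rainbow G \<longleftrightarrow> card (cols G) = card G"

definition almost_rainbow :: "cgraph \<Rightarrow> bool" where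
  "almost_rainbow G \<longleftrightarrow> card (cols G) + 1 = card G"

definition path_edges :: "nat list \<Rightarrow> nat set set" where
  "path_edges vs = {{vs ! i, vs ! Suc i} | i. Suc i < length vs}"

definition upath :: "nat set set \<Rightarrow> nat \<Rightarrow> nat \<Rightarrow> bool" where
  "upath E s t \<longleftrightarrow> (\<exists>vs. distinct vs \<and> 2 \<le> length vs \<and> hd vs = s \<and> last vs = t \<and>
      E = path_edges vs)"

definition ucycle :: "nat set set \<Rightarrow> bool" where
  "ucycle E \<longleftrightarrow> (\<exists>vs. distinct vs \<and> 3 \<le> length vs \<and>
      E = path_edges vs \<union> {{last vs, hd vs}})"

definition uconnected :: "nat set set \<Rightarrow> bool" where
  "uconnected E \<longleftrightarrow> (\<forall>u\<in>\<Union>E. \<forall>v\<in>\<Union>E. u \<noteq> v \<longrightarrow> (\<exists>P\<subseteq>E. upath P u v))"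

definition utree :: "nat set set \<Rightarrow> bool" where
  "utree E \<longleftrightarrow> E \<noteq> {} \<and> uconnected E \<and> \<not> (\<exists>C\<subseteq>E. ucycle C)"

definition cpath :: "cgraph \<Rightarrow> nat \<Rightarrow> nat \<Rightarrow> bool" where
  "cpath P s t \<longleftrightarrow> colored_graph P \<and> upath (Es P) s t"

definition ccycle :: "cgraph \<Rightarrow> bool" where
  "ccycle C \<longleftrightarrow> colored_graph C \<and> ucycle (Es C)"

definition ctree :: "cgraph \<Rightarrow> bool" where
  "ctree T \<longleftrightarrow> colored_graph T \<and> utree (Es T)"

definition long_rainbow_odd_cycle :: "cgraph \<Rightarrow> bool" where
  "long_rainbow_odd_cycle C \<longleftrightarrow> ccycle C \<and> rainbow C \<and> odd (card C) \<and> 7 \<le> card C"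

definition theta_paths :: "cgraph \<Rightarrow> cgraph \<Rightarrow> cgraph \<Rightarrow> nat \<Rightarrow> nat \<Rightarrow> bool" where
  "theta_paths P1 P2 P3 s t \<longleftrightarrow> s \<noteq> t \<and> cpath P1 s t \<and> cpath P2 s t \<and> cpath P3 s t \<and>
     Vs P1 \<inter> Vs P2 \<subseteq> {s, t} \<and> Vs P1 \<inter> Vs P3 \<subseteq> {s, t} \<and> Vs P2 \<inter> Vs P3 \<subseteq> {s, t} \<and>
     Es P1 \<inter> Es P2 = {} \<and> Es P1 \<inter> Es P3 = {} \<and> Es P2 \<inter> Es P3 = {}"

definition theta_graph :: "cgraph \<Rightarrow> bool" where
  "theta_graph G \<longleftrightarrow> colored_graph G \<and>
     (\<exists>P1 P2 P3 s t. theta_paths P1 P2 P3 s t \<and> G = P1 \<union> P2 \<union> P3)"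

definition bad_piece :: "cgraph \<Rightarrow> bool" where
  "bad_piece G \<longleftrightarrow> theta_graph G \<and> almost_rainbow G \<and> 6 \<le> card (Vs G) \<and>
     (\<exists>P1 P2 P3 s t. theta_paths P1 P2 P3 s t \<and> rainbow P1 \<and> rainbow P2 \<and> rainbow P3 \<and>
        G = P1 \<union> P2 \<union> P3)"

definition is_partition :: "cgraph \<Rightarrow> cgraph list \<Rightarrow> bool" where
  "is_partition G ps \<longleftrightarrow> (\<forall>p\<in>set ps. colored_graph p) \<and> \<Union> (set ps) = G \<and>
     (\<forall>i<length ps. \<forall>j<length ps. i \<noteq> j \<longrightarrow>
        card (Vs (ps ! i) \<inter> Vs (ps ! j)) \<le> 1 \<and> cols (ps ! i) \<inter> cols (ps ! j) = {})"

definition frankenstein :: "cgraph \<Rightarrow> cgraph list \<Rightarrow> cgraph list \<Rightarrow> cgraph list \<Rightarrow> bool" where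
  "frankenstein F Cs Bs Ts \<longleftrightarrow> colored_graph F \<and> is_partition F (Cs @ Bs @ Ts) \<and>
     1 \<le> length Cs + length Bs + length Ts \<and>
     (\<forall>C\<in>set Cs. long_rainbow_odd_cycle C) \<and> (\<forall>B\<in>set Bs. bad_piece B) \<and>
     (\<forall>T\<in>set Ts. ctree T \<and> rainbow T) \<and>
     (\<forall>i<length Ts. \<forall>j<length Ts. i \<noteq> j \<longrightarrow> Vs (Ts ! i) \<inter> Vs (Ts ! j) = {}) \<and>
     \<not> (\<exists>H\<subseteq>F. ccycle H \<and> rainbow H \<and> even (card H))"

definition tree_root :: "cgraph \<Rightarrow> nat" where
  "tree_root T = Min (Vs T)"

definition tree_depth :: "cgraph \<Rightarrow> nat \<Rightarrow> nat" where
  "tree_depth T v = (if v = tree_root T then 0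
     else (THE k. \<exists>P\<subseteq>T. cpath P (tree_root T) v \<and> card P = k))"

definition total_depth :: "cgraph list \<Rightarrow> nat" where
  "total_depth Ts = sum_list (map (\<lambda>T. \<Sum>v\<in>Vs T. tree_depth T v) Ts)"

definition union_fam :: "(nat \<Rightarrow> cgraph) \<Rightarrow> nat \<Rightarrow> cgraph" where
  "union_fam D m = (\<Union>i\<in>{1..m}. D i)"

definition standing_setup :: "nat \<Rightarrow> nat \<Rightarrow> (nat \<Rightarrow> cgraph) \<Rightarrow> bool" where
  "standing_setup n m D \<longleftrightarrow> 1 \<le> n \<and> m = (6 * (n - 1)) div 5 + 1 \<and>
     (\<forall>i\<in>{1..m}. ccycle (D i) \<and> even (card (D i)) \<and> Vs (D i) \<subseteq> {1..n} \<and>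
        (\<forall>x\<in>D i. snd x = i)) \<and>
     \<not> (\<exists>H\<subseteq>union_fam D m. ccycle H \<and> rainbow H \<and> even (card H))"

definition frank_sub :: "(nat \<Rightarrow> cgraph) \<Rightarrow> nat \<Rightarrow> cgraph \<Rightarrow> cgraph list \<Rightarrow> cgraph list \<Rightarrow> cgraph list \<Rightarrow> bool" where
  "frank_sub D m F Cs Bs Ts \<longleftrightarrow> frankenstein F Cs Bs Ts \<and> F \<subseteq> union_fam D m"

definition frank_better ::
  "cgraph \<Rightarrow> cgraph list \<Rightarrow> cgraph list \<Rightarrow> cgraph list \<Rightarrow>
   cgraph \<Rightarrow> cgraph list \<Rightarrow> cgraph list \<Rightarrow> cgraph list \<Rightarrow> bool" where
  "frank_better F' Cs' Bs' Ts' F Cs Bs Ts \<longleftrightarrow>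
     length Cs' > length Cs \<or>
     (length Cs' = length Cs \<and> (length Bs' > length Bs \<or>
       (length Bs' = length Bs \<and> (card F' > card F \<or>
          (card F' = card F \<and> total_depth Ts' < total_depth Ts)))))"

definition frank_optimal :: "(nat \<Rightarrow> cgraph) \<Rightarrow> nat \<Rightarrow> cgraph \<Rightarrow> cgraph list \<Rightarrow> cgraph list \<Rightarrow> cgraph list \<Rightarrow> bool" where
  "frank_optimal D m F Cs Bs Ts \<longleftrightarrow> frank_sub D m F Cs Bs Ts \<and>
     (\<forall>F' Cs' Bs' Ts'. frank_sub D m F' Cs' Bs' Ts' \<longrightarrow> \<not> frank_better F' Cs' Bs' Ts' F Cs Bs Ts)"

definition Lambda :: "nat \<Rightarrow> cgraph \<Rightarrow> nat set" where
  "Lambda m F = {1..m} - cols F"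

definition coincident :: "cedge \<Rightarrow> cedge \<Rightarrow> bool" where
  "coincident x y \<longleftrightarrow> fst x = fst y \<and> snd x \<noteq> snd y"

definition outer_edge :: "(nat \<Rightarrow> cgraph) \<Rightarrow> nat \<Rightarrow> cgraph \<Rightarrow> cedge \<Rightarrow> bool" where
  "outer_edge D m F f \<longleftrightarrow> f \<in> (\<Union>l\<in>Lambda m F. D l) \<and> \<not> (\<exists>g\<in>F. coincident g f)"

end

theory Submission imports Defs begin

lemma pe_Nil[simp]: "path_edges [] = {}" and pe_single[simp]: "path_edges [a] = {}"
  by (auto simp: path_edges_def)

lemma pe_Cons2: "path_edges (a # b # xs) = insert {a,b} (path_edges (b # xs))"
proof
  show "path_edges (a # b # xs) \<subseteq> insert {a,b} (path_edges (b # xs))"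
  proof
    fix e assume "e \<in> path_edges (a # b # xs)"
    then obtain i where e: "e = {(a#b#xs) ! i, (a#b#xs) ! Suc i}" "Suc i < length (a#b#xs)"
      unfolding path_edges_def by blast
    show "e \<in> insert {a,b} (path_edges (b # xs))"
    proof (cases i)
      case 0 then show ?thesis using e by simp
    next
      case (Suc j) then show ?thesis using e unfolding path_edges_def by auto
    qed
  qed
next
  show "insert {a,b} (path_edges (b # xs)) \<subseteq> path_edges (a # b # xs)"
  proof
    fix e assume "e \<in> insert {a,b} (path_edges (b # xs))"
    then consider "e = {a,b}" | j where "e = {(b#xs) ! j, (b#xs) ! Suc j}" "Suc j < length (b#xs)"
      unfolding path_edges_def by blast
    then show "e \<in> path_edges (a # b # xs)"
    proof cases
      case 1 then show ?thesis unfolding path_edges_def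
        by (rule_tac CollectI, rule_tac x=0 in exI) simp
    next
      case 2 then show ?thesis unfolding path_edges_def
        by (rule_tac CollectI, rule_tac x="Suc j" in exI) simp
    qed
  qed
qed

lemma pe_append: "xs \<noteq> [] \<Longrightarrow> ys \<noteq> [] \<Longrightarrow>
  path_edges (xs @ ys) = path_edges xs \<union> path_edges ys \<union> {{last xs, hd ys}}"
proof (induction xs)
  case Nil then show ?case by simp
next
  case (Cons a xs)
  show ?case
  proof (cases xs)
    case Nil then show ?thesis using Cons.prems by (cases ys) (auto simp: pe_Cons2)
  next
    case (Cons b zs)
    then show ?thesis using Cons.IH Cons.prems by (auto simp: pe_Cons2)
  qed
qed

lemma pe_rev: "path_edges (rev xs) = path_edges xs"
proof (induction xs)
  case Nil then show ?case by simp
next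
  case (Cons x xs)
  show ?case
  proof (cases xs)
    case Nil then show ?thesis by simp
  next
    case (Cons b zs)
    have "path_edges (rev (x # xs)) = path_edges (rev xs @ [x])" by simp
    also have "\<dots> = path_edges xs \<union> {{last (rev xs), x}}"
      using Cons Cons.IH by (subst pe_append) auto
    also have "\<dots> = path_edges (x # xs)" using Cons by (auto simp: pe_Cons2 insert_commute)
    finally show ?thesis .
  qed
qed

lemma pe_Union: "2 \<le> length vs \<Longrightarrow> \<Union> (path_edges vs) = set vs"
proof (induction vs)
  case Nil then show ?case by simp
next
  case (Cons a vs)
  show ?case
  proof (cases vs)
    case Nil then show ?thesis using Cons by simp
  next
    case (Cons b zs)
    show ?thesis
    proof (cases zs)
      case Nil then show ?thesis using Cons by (simp add: pe_Cons2)
    next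
      case (Cons c ws)
      then show ?thesis using \<open>vs = b # zs\<close> Cons.IH by (auto simp: pe_Cons2)
    qed
  qed
qed


lemma cg_card_Es: "colored_graph G \<Longrightarrow> card (Es G) = card G"
  unfolding colored_graph_def Es_def by (metis card_image inj_onI)

lemma Vs_Es: "Vs G = \<Union> (Es G)" by (simp add: Vs_def Es_def)

lemma two_path_cycle:
  assumes a: "cpath Pa s t" and b: "cpath Pb s t" and st: "s \<noteq> t"
    and v: "Vs Pa \<inter> Vs Pb \<subseteq> {s,t}" and e: "Es Pa \<inter> Es Pb = {}"
  shows "ccycle (Pa \<union> Pb) \<and> card (Pa \<union> Pb) = card Pa + card Pb"
proof -
  from a obtain vs where vs: "distinct vs" "2 \<le> length vs" "hd vs = s" "last vs = t"
      "Es Pa = path_edges vs" and ca: "colored_graph Pa"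
    unfolding cpath_def upath_def by blast
  from b obtain ws where ws: "distinct ws" "2 \<le> length ws" "hd ws = s" "last ws = t"
      "Es Pb = path_edges ws" and cb: "colored_graph Pb"
    unfolding cpath_def upath_def by blast
  have disj: "Pa \<inter> Pb = {}" using e unfolding Es_def by auto
  have cg: "colored_graph (Pa \<union> Pb)"
    using ca cb e unfolding colored_graph_def Es_def by (auto; blast)
  have card: "card (Pa \<union> Pb) = card Pa + card Pb"
    using ca cb disj unfolding colored_graph_def by (simp add: card_Un_disjoint)
  have sv: "set vs \<inter> set ws \<subseteq> {s,t}" using v vs ws pe_Union unfolding Vs_Es by metis
  obtain mid where wsm: "ws = s # mid @ [t]"
  proof -
    obtain w1 ws' where "ws = w1 # ws'" using ws(2) by (cases ws) auto
    moreover have "ws' \<noteq> []" using ws(2) calculation by auto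
    ultimately show ?thesis using that ws(3,4)
      by (metis append_butlast_last_id last_ConsR list.sel(1))
  qed
  define cs where "cs = vs @ rev mid"
  have vs_ne: "vs \<noteq> []" using vs(2) by auto
  have midv: "set mid \<inter> set vs = {}"
    using sv ws(1) wsm by auto
  have dcs: "distinct cs" unfolding cs_def using vs(1) ws(1) wsm midv by auto
  have uc: "ucycle (Es Pa \<union> Es Pb)"
  proof (cases "mid = []")
    case True
    have "Es Pb = {{s,t}}" using ws(5) wsm True by (simp add: pe_Cons2)
    then have "length vs \<noteq> 2"
      using vs e by (cases vs; cases "tl vs"; auto simp: pe_Cons2)
    then have "3 \<le> length vs" using vs(2) by auto
    moreover have "Es Pa \<union> Es Pb = path_edges vs \<union> {{last vs, hd vs}}"
      using vs \<open>Es Pb = {{s,t}}\<close> by (auto simp: insert_commute)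
    ultimately show ?thesis unfolding ucycle_def using vs(1) by blast
  next
    case False
    have "length cs \<ge> 3" unfolding cs_def using vs(2) False by (cases mid) auto
    moreover have "path_edges cs \<union> {{last cs, hd cs}} = Es Pa \<union> Es Pb"
    proof -
      have "path_edges cs = path_edges vs \<union> path_edges mid \<union> {{t, last mid}}"
        unfolding cs_def using vs_ne False vs(4)
        by (simp add: pe_append pe_rev hd_rev)
      moreover have "last cs = hd mid" unfolding cs_def using False by (simp add: last_rev)
      moreover have "hd cs = s" unfolding cs_def using vs_ne vs(3) by simp
      moreover have "path_edges ws = insert {s, hd mid} (path_edges mid \<union> {{last mid, t}})"
      proof -
        obtain m1 ms where "mid = m1 # ms" using False by (cases mid) auto
        then have "path_edges ws = insert {s, m1} (path_edges (mid @ [t]))"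
          using wsm by (simp add: pe_Cons2)
        also have "path_edges (mid @ [t]) = path_edges mid \<union> {{last mid, t}}"
          using False by (simp add: pe_append)
        finally show ?thesis using \<open>mid = m1 # ms\<close> by simp
      qed
      ultimately show ?thesis using vs(5) ws(5) by (auto simp: insert_commute)
    qed
    ultimately show ?thesis unfolding ucycle_def using dcs by metis
  qed
  have "Es (Pa \<union> Pb) = Es Pa \<union> Es Pb" by (simp add: Es_def image_Un)
  then show ?thesis using cg uc card unfolding ccycle_def by simp
qed

lemma theta_even:
  assumes "theta_paths P1 P2 P3 s t"
  shows "\<exists>K \<subseteq> P1 \<union> P2 \<union> P3. ccycle K \<and> even (card K)"
proof -
  have h: "ccycle (P1 \<union> P2) \<and> card (P1 \<union> P2) = card P1 + card P2"
    "ccycle (P1 \<union> P3) \<and> card (P1 \<union> P3) = card P1 + card P3"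
    "ccycle (P2 \<union> P3) \<and> card (P2 \<union> P3) = card P2 + card P3"
    using assms unfolding theta_paths_def
    by (auto intro!: two_path_cycle[THEN conjunct1] two_path_cycle[THEN conjunct2])
  consider "even (card P1 + card P2)" | "even (card P1 + card P3)" | "even (card P2 + card P3)"
    by (cases "even (card P1)"; cases "even (card P2)"; cases "even (card P3)") auto
  then show ?thesis
  proof cases
    case 1 then show ?thesis using h(1) by (metis Un_upper1 sup.coboundedI1)
  next
    case 2 then show ?thesis using h(2) by (metis Un_least Un_upper1 Un_upper2 sup.coboundedI1)
  next
    case 3 then show ?thesis using h(3) by (metis Un_assoc Un_upper2)
  qed
qed


lemma rainbow_inj: "finite G \<Longrightarrow> rainbow G \<longleftrightarrow> inj_on snd G"
  unfolding rainbow_def cols_def by (simp add: inj_on_iff_eq_card)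

lemma swap_cycle:
  assumes K: "ccycle K" and g: "g \<in> K" and x: "fst x = fst g" "x \<notin> K"
  shows "ccycle (insert x (K - {g})) \<and> card (insert x (K - {g})) = card K"
proof -
  have cg: "colored_graph K" using K by (simp add: ccycle_def)
  have fK: "finite K" using cg by (simp add: colored_graph_def)
  have xn: "x \<notin> K - {g}" using x by auto
  have cg': "colored_graph (insert x (K - {g}))"
    using cg g x unfolding colored_graph_def by (auto; metis)
  have "Es (insert x (K - {g})) = Es K" unfolding Es_def using g x by auto
  moreover have "card (insert x (K - {g})) = card K"
    using fK xn g by (metis card_Suc_Diff1 card.insert finite_Diff)
  ultimately show ?thesis using K cg' unfolding ccycle_def by simp
qed

theorem proposition3p1:
  fixes n m :: nat and D :: "nat \<Rightarrow> cgraph"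
    and F :: cgraph and Cs Bs Ts :: "cgraph list"
  assumes "standing_setup n m D"
    and "frank_optimal D m F Cs Bs Ts"
  shows "\<forall>l\<in>Lambda m F. \<exists>f\<in>D l. outer_edge D m F f"
proof (rule ballI, rule ccontr)
  fix l assume lL: "l \<in> Lambda m F" and no: "\<not> (\<exists>f\<in>D l. outer_edge D m F f)"
  have l1: "l \<in> {1..m}" and lF: "l \<notin> cols F" using lL by (auto simp: Lambda_def)
  have ss: "\<forall>i\<in>{1..m}. ccycle (D i) \<and> even (card (D i)) \<and> Vs (D i) \<subseteq> {1..n} \<and>
        (\<forall>x\<in>D i. snd x = i)"
    and noU: "\<not> (\<exists>H\<subseteq>union_fam D m. ccycle H \<and> rainbow H \<and> even (card H))"
    using assms(1) unfolding standing_setup_def by auto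
  have Dl: "ccycle (D l)" "even (card (D l))" "\<forall>x\<in>D l. snd x = l" using ss l1 by auto
  have fr: "frankenstein F Cs Bs Ts" and FU: "F \<subseteq> union_fam D m"
    using assms(2) unfolding frank_optimal_def frank_sub_def by auto
  have DlU: "D l \<subseteq> union_fam D m" using l1 unfolding union_fam_def by auto
  have cgF: "colored_graph F" using fr by (simp add: frankenstein_def)
  have fF: "finite F" using cgF by (simp add: colored_graph_def)
  have noF: "\<not> (\<exists>H\<subseteq>F. ccycle H \<and> rainbow H \<and> even (card H))"
    using fr by (simp add: frankenstein_def)
  have cov: "\<forall>f\<in>D l. \<exists>g\<in>F. fst g = fst f"
  proof
    fix f assume f: "f \<in> D l"
    then have "\<not> outer_edge D m F f" using no by blast
    moreover have "f \<in> (\<Union>l\<in>Lambda m F. D l)" using f lL by blast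
    ultimately show "\<exists>g\<in>F. fst g = fst f" unfolding outer_edge_def coincident_def by auto
  qed
  define H where "H = {g\<in>F. fst g \<in> Es (D l)}"
  have HF: "H \<subseteq> F" unfolding H_def by auto
  have EsH: "Es H = Es (D l)" unfolding H_def Es_def using cov by force
  have cgH: "colored_graph H" using cgF HF unfolding colored_graph_def by (meson finite_subset subsetD)
  have cgD: "colored_graph (D l)" using Dl by (simp add: ccycle_def)
  have ccH: "ccycle H" using cgH EsH Dl(1) by (simp add: ccycle_def)
  have cardH: "card H = card (D l)" using cg_card_Es[OF cgH] cg_card_Es[OF cgD] EsH by simp
  have evH: "even (card H)" using cardH Dl(2) by simp
  have fH: "finite H" using cgH by (simp add: colored_graph_def)
  have "\<not> rainbow H" using noF HF ccH evH by blast
  then obtain g1 g2 where g12: "g1 \<in> H" "g2 \<in> H" "g1 \<noteq> g2" "snd g1 = snd g2"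
    using rainbow_inj[OF fH] unfolding inj_on_def by blast
  define ps where "ps = Cs @ Bs @ Ts"
  have part: "is_partition F ps" using fr by (simp add: frankenstein_def ps_def)
  then have un: "\<Union> (set ps) = F" and pcg: "\<forall>p\<in>set ps. colored_graph p"
    and pd: "\<forall>i<length ps. \<forall>j<length ps. i \<noteq> j \<longrightarrow> cols (ps ! i) \<inter> cols (ps ! j) = {}"
    unfolding is_partition_def by auto
  obtain i where i: "i < length ps" "g1 \<in> ps ! i"
    using g12(1) HF un by (metis UnionE in_set_conv_nth subsetD)
  obtain j where j: "j < length ps" "g2 \<in> ps ! j"
    using g12(2) HF un by (metis UnionE in_set_conv_nth subsetD)
  have "i = j"
  proof (rule ccontr)
    assume "i \<noteq> j"
    then have "cols (ps ! i) \<inter> cols (ps ! j) = {}" using pd i j by auto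
    moreover have "snd g1 \<in> cols (ps ! i)" "snd g1 \<in> cols (ps ! j)"
      using i j g12(4) unfolding cols_def by (metis image_eqI)+
    ultimately show False by blast
  qed
  define p where "p = ps ! i"
  have pin: "p \<in> set ps" using i p_def by simp
  have g1p: "g1 \<in> p" and g2p: "g2 \<in> p" using i j \<open>i = j\<close> p_def by auto
  have pF: "p \<subseteq> F" using pin un by blast
  have fp: "finite p" using pcg pin by (simp add: colored_graph_def)
  have notr: "\<not> rainbow p" using g12 g1p g2p rainbow_inj[OF fp] unfolding inj_on_def by blast
  have "p \<in> set Bs"
  proof -
    have "p \<in> set Cs \<or> p \<in> set Bs \<or> p \<in> set Ts" using pin ps_def by auto
    moreover have "p \<notin> set Cs" using fr notr
      unfolding frankenstein_def long_rainbow_odd_cycle_def by auto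
    moreover have "p \<notin> set Ts" using fr notr unfolding frankenstein_def by auto
    ultimately show ?thesis by blast
  qed
  then have bp: "bad_piece p" using fr by (simp add: frankenstein_def)
  then obtain P1 P2 P3 s t where th: "theta_paths P1 P2 P3 s t" and pP: "p = P1 \<union> P2 \<union> P3"
    unfolding bad_piece_def by blast
  have ar: "card (cols p) + 1 = card p" using bp by (simp add: bad_piece_def almost_rainbow_def)
  define p0 where "p0 = p - {g1}"
  have "snd ` p0 = snd ` p"
  proof
    show "snd ` p0 \<subseteq> snd ` p" unfolding p0_def by auto
    show "snd ` p \<subseteq> snd ` p0"
    proof
      fix c assume "c \<in> snd ` p"
      then obtain y where y: "y \<in> p" "c = snd y" by auto
      show "c \<in> snd ` p0"
      proof (cases "y = g1")
        case True then show ?thesis using y g12 g2p unfolding p0_def by (metis DiffI image_eqI singletonD)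
      next
        case False then show ?thesis using y unfolding p0_def by auto
      qed
    qed
  qed
  moreover have "card p0 = card p - 1" unfolding p0_def using fp g1p by simp
  ultimately have "card (snd ` p0) = card p0" using ar unfolding cols_def by simp
  then have inj0: "inj_on snd p0" using fp unfolding p0_def by (simp add: inj_on_iff_eq_card)
  obtain K where K: "K \<subseteq> p" "ccycle K" "even (card K)" using theta_even[OF th] pP by blast
  have KF: "K \<subseteq> F" using K pF by blast
  have fK: "finite K" using K(2) by (simp add: ccycle_def colored_graph_def)
  show False
  proof (cases "g1 \<in> K")
    case False
    then have "K \<subseteq> p0" using K unfolding p0_def by blast
    then have "rainbow K" using inj0 rainbow_inj[OF fK] inj_on_subset by blast
    then show False using noF KF K by blast
  next
    case True
    have "fst g1 \<in> Es (D l)" using g12(1) unfolding H_def by simp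
    then obtain x where x: "x \<in> D l" "fst x = fst g1" unfolding Es_def by auto
    have sx: "snd x = l" using x Dl(3) by simp
    have xK: "x \<notin> K" using KF lF sx unfolding cols_def by force
    define K' where "K' = insert x (K - {g1})"
    have K'c: "ccycle K'" "card K' = card K" using swap_cycle[OF K(2) True x(2) xK] K'_def by auto
    have "inj_on snd (K - {g1})" using inj0 K unfolding p0_def by (blast intro: inj_on_subset)
    moreover have "snd x \<notin> snd ` (K - {g1})" using sx lF KF unfolding cols_def by blast
    ultimately have "inj_on snd K'" unfolding K'_def by (auto simp: inj_on_insert)
    moreover have "finite K'" using fK K'_def by simp
    ultimately have "rainbow K'" using rainbow_inj by blast
    moreover have "K' \<subseteq> union_fam D m" using KF FU x DlU K'_def by blast
    ultimately show False using noU K'c K(3) by auto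
  qed
qed

end
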